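(* Let $I\subset\mathbb{R}$ be an open interval and let $x+iy:I\to\mathbb{C}$ be a smooth immersion. Give $\mathbb{C}^2$ its flat metric. (a) Let $\lambda\neq0,1$ be real. The Levi-flat hypersurface $\{(e^{w+x(r)+iy(r)},\ e^{\lambda w}): w\in\mathbb{C},\ r\in I\}\subset\mathbb{C}^2$ is minimal if and only if $y$ is constant on $I$. (b) Let $\lambda\neq0$ be real. The Levi-flat hypersurface $\{(w+x(r)+iy(r),\ e^{\lambda w}): w\in\mathbb{C},\ r\in I\}\subset\mathbb{C}^2$ is minimal if and only if $y$ is constant on $I$. In particular, $\{(z_1,z_2)\in\mathbb{C}^2:\operatorname{Im}(z_2e^{-z_1})=0\}$ is a closed embedded minimal Levi-flat hypersurface.
   Context: A real hypersurface is minimal if its mean curvature vanishes. *)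

theory Defs
  imports "HOL-Analysis.Analysis"
begin

definition smooth_on :: "real set \<Rightarrow> (real \<Rightarrow> real) \<Rightarrow> bool" where
  "smooth_on I f \<longleftrightarrow> (\<forall>n. \<forall>t\<in>I. ((deriv ^^ n) f) differentiable (at t))"

text \<open>Partial derivative of a map of three real parameters (coordinates of real^3)
  into C^2 = complex \<times> complex, which carries its flat (Euclidean) metric.\<close>
definition partial :: "(real^3 \<Rightarrow> 'b::real_normed_vector) \<Rightarrow> 3 \<Rightarrow> real^3 \<Rightarrow> 'b" where
  "partial F i p = frechet_derivative F (at p) (axis i 1)"

definition metric3 :: "(real^3 \<Rightarrow> complex \<times> complex) \<Rightarrow> real^3 \<Rightarrow> real^3^3" where
  "metric3 F p = (\<chi> i j. inner (partial F i p) (partial F j p))"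

text \<open>The vector sum g^ij F_ij; its normal component is the mean curvature vector.\<close>
definition laplace_vec :: "(real^3 \<Rightarrow> complex \<times> complex) \<Rightarrow> real^3 \<Rightarrow> complex \<times> complex" where
  "laplace_vec F p =
     (\<Sum>i\<in>UNIV. \<Sum>j\<in>UNIV. (matrix_inv (metric3 F p) $ i $ j) *\<^sub>R partial (partial F j) i p)"

definition immersion3 :: "(real^3) set \<Rightarrow> (real^3 \<Rightarrow> complex \<times> complex) \<Rightarrow> bool" where
  "immersion3 U F \<longleftrightarrow> (\<forall>p\<in>U. F differentiable (at p) \<and> inj (frechet_derivative F (at p)))"

definition minimal_hypersurface :: "(real^3) set \<Rightarrow> (real^3 \<Rightarrow> complex \<times> complex) \<Rightarrow> bool" where
  "minimal_hypersurface U F \<longleftrightarrow>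
     (\<forall>p\<in>U. \<forall>\<nu>. (\<forall>i. inner \<nu> (partial F i p) = 0) \<longrightarrow> inner \<nu> (laplace_vec F p) = 0)"

text \<open>Parameter w = u + iv with u = p$1, v = p$2, and r = p$3.\<close>
definition wpar :: "real^3 \<Rightarrow> complex" where
  "wpar p = Complex (p$1) (p$2)"

definition hyp_a :: "real \<Rightarrow> (real \<Rightarrow> real) \<Rightarrow> (real \<Rightarrow> real) \<Rightarrow> real^3 \<Rightarrow> complex \<times> complex" where
  "hyp_a lam x y p = (exp (wpar p + Complex (x (p$3)) (y (p$3))), exp (of_real lam * wpar p))"

definition hyp_b :: "real \<Rightarrow> (real \<Rightarrow> real) \<Rightarrow> (real \<Rightarrow> real) \<Rightarrow> real^3 \<Rightarrow> complex \<times> complex" where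
  "hyp_b lam x y p = (wpar p + Complex (x (p$3)) (y (p$3)), exp (of_real lam * wpar p))"

text \<open>Parametrization of {Im(z2 e^(-z1)) = 0}: (w, r) \<mapsto> (w, r e^w).\<close>
definition hyp_c :: "real^3 \<Rightarrow> complex \<times> complex" where
  "hyp_c p = (wpar p, of_real (p$3) * exp (wpar p))"

end

theory Submission
  imports Defs
begin


definition cm :: "complex \<Rightarrow> complex \<times> complex \<Rightarrow> complex \<times> complex" where
  "cm c z = (c * fst z, c * snd z)"
definition hh :: "complex \<times> complex \<Rightarrow> complex \<times> complex \<Rightarrow> complex" where
  "hh X Y = fst X * cnj (fst Y) + snd X * cnj (snd Y)"
definition om :: "complex \<times> complex \<Rightarrow> complex \<times> complex \<Rightarrow> complex" where
  "om X Y = fst X * snd Y - snd X * fst Y"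

lemma inner_hh: "inner (X::complex\<times>complex) Y = Re (hh X Y)"
  by (cases X; cases Y) (simp add: hh_def inner_prod_def inner_complex_def)

lemma cm_add: "cm c (x + y) = cm c x + cm c y"
  by (simp add: cm_def algebra_simps)
lemma cm_scaleR: "cm c (r *\<^sub>R x) = r *\<^sub>R cm c x"
  by (simp add: cm_def scaleR_conv_of_real)

lemma cm_deriv:
  assumes "(A has_derivative A') (at p)"
  shows "((\<lambda>q. cm c (A q)) has_derivative (\<lambda>h. cm c (A' h))) (at p)"
  unfolding cm_def
  by (rule derivative_eq_intros assms refl)+

lemma partial_eq:
  assumes "(F has_derivative (\<lambda>h. h$1 *\<^sub>R a1 + h$2 *\<^sub>R a2 + h$3 *\<^sub>R a3)) (at p)"
  shows "partial F 1 p = a1" "partial F 2 p = a2" "partial F 3 p = a3"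
  using frechet_derivative_at[OF assms, symmetric]
  by (simp_all add: partial_def axis_def)

lemma partial_transform:
  assumes "open U" "p \<in> U" "\<And>q. q \<in> U \<Longrightarrow> G q = H q"
    "(H has_derivative (\<lambda>h. h$1 *\<^sub>R a1 + h$2 *\<^sub>R a2 + h$3 *\<^sub>R a3)) (at p)"
  shows "partial G 1 p = a1" "partial G 2 p = a2" "partial G 3 p = a3"
proof -
  have "(G has_derivative (\<lambda>h. h$1 *\<^sub>R a1 + h$2 *\<^sub>R a2 + h$3 *\<^sub>R a3)) (at p)"
    by (rule has_derivative_transform_within_open[OF assms(4,1,2)]) (use assms(3) in auto)
  then show "partial G 1 p = a1" "partial G 2 p = a2" "partial G 3 p = a3"
    by (rule partial_eq)+
qed

lemma second_partials:
  fixes F A B :: "real^3 \<Rightarrow> complex \<times> complex"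
  assumes U: "open U" "p \<in> U"
    and dF: "\<And>q. q \<in> U \<Longrightarrow> (F has_derivative (\<lambda>h. h$1 *\<^sub>R A q + h$2 *\<^sub>R cm \<i> (A q) + h$3 *\<^sub>R B q)) (at q)"
    and dA: "(A has_derivative (\<lambda>h. h$1 *\<^sub>R C + h$2 *\<^sub>R cm \<i> C + h$3 *\<^sub>R D)) (at p)"
    and dB: "(B has_derivative (\<lambda>h. h$1 *\<^sub>R D + h$2 *\<^sub>R cm \<i> D + h$3 *\<^sub>R E)) (at p)"
  shows "partial F 1 p = A p" "partial F 2 p = cm \<i> (A p)" "partial F 3 p = B p"
    "partial (partial F 1) 1 p = C" "partial (partial F 1) 2 p = cm \<i> C" "partial (partial F 1) 3 p = D"
    "partial (partial F 2) 1 p = cm \<i> C" "partial (partial F 2) 2 p = cm \<i> (cm \<i> C)" "partial (partial F 2) 3 p = cm \<i> D"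
    "partial (partial F 3) 1 p = D" "partial (partial F 3) 2 p = cm \<i> D" "partial (partial F 3) 3 p = E"
proof -
  have P: "partial F 1 q = A q" "partial F 2 q = cm \<i> (A q)" "partial F 3 q = B q" if "q \<in> U" for q
    using partial_eq[OF dF[OF that]] by auto
  show "partial F 1 p = A p" "partial F 2 p = cm \<i> (A p)" "partial F 3 p = B p"
    using P U by auto
  show "partial (partial F 1) 1 p = C" "partial (partial F 1) 2 p = cm \<i> C" "partial (partial F 1) 3 p = D"
    by (rule partial_transform[OF U _ dA], rule P, assumption)+
  have dA2: "((\<lambda>q. cm \<i> (A q)) has_derivative (\<lambda>h. h$1 *\<^sub>R cm \<i> C + h$2 *\<^sub>R cm \<i> (cm \<i> C) + h$3 *\<^sub>R cm \<i> D)) (at p)"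
    using cm_deriv[OF dA, of \<i>] by (simp add: cm_add cm_scaleR)
  show "partial (partial F 2) 1 p = cm \<i> C" "partial (partial F 2) 2 p = cm \<i> (cm \<i> C)" "partial (partial F 2) 3 p = cm \<i> D"
    by (rule partial_transform[OF U _ dA2], rule P, assumption)+
  show "partial (partial F 3) 1 p = D" "partial (partial F 3) 2 p = cm \<i> D" "partial (partial F 3) 3 p = E"
    by (rule partial_transform[OF U _ dB], rule P, assumption)+
qed

lemma matrix_inv_eq:
  fixes A :: "real^'n^'n"
  assumes "A ** B = mat 1" "B ** A = mat 1"
  shows "matrix_inv A = B"
proof -
  have "A ** matrix_inv A = mat 1 \<and> matrix_inv A ** A = mat 1"
    unfolding matrix_inv_def by (rule someI[of _ B]) (use assms in auto)
  then have "matrix_inv A = (matrix_inv A ** A) ** B"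
    by (metis assms(1) matrix_mul_assoc matrix_mul_rid)
  then show ?thesis using \<open>_ \<and> _\<close> by (simp add: matrix_mul_lid)
qed

lemma lagrange:
  "Re (hh A A) * Re (hh B B) - (Re (hh A B))^2 - (Im (hh A B))^2 = (cmod (om A B))^2"
  by (cases A; cases B) (simp add: hh_def om_def cmod_power2, simp add: algebra_simps power2_eq_square)

lemma ginv:
  fixes a b s1 s2 dl :: real
  assumes "a > 0" "dl = a * b - s1^2 - s2^2" "dl > 0"
  shows "(vector [vector [a, 0, s1], vector [0, a, - s2], vector [s1, - s2, b]] :: real^3^3) **
    (vector [vector [(a * b - s2^2)/(a * dl), - s1 * s2/(a * dl), - s1/dl],
       vector [- s1 * s2/(a * dl), (a * b - s1^2)/(a * dl), s2/dl], vector [- s1/dl, s2/dl, a/dl]] :: real^3^3) = mat 1"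
proof -
  have "a \<noteq> 0" "dl \<noteq> 0" using assms by auto
  moreover have "b = (dl + s1^2 + s2^2) / a" using assms by (simp add: field_simps)
  ultimately show ?thesis
    by (simp add: matrix_matrix_mult_def vec_eq_iff forall_3 sum_3 mat_def, simp add: field_simps power2_eq_square)
qed

lemma ginv2:
  fixes a b s1 s2 dl :: real
  assumes "a > 0" "dl = a * b - s1^2 - s2^2" "dl > 0"
  shows "(vector [vector [(a * b - s2^2)/(a * dl), - s1 * s2/(a * dl), - s1/dl],
       vector [- s1 * s2/(a * dl), (a * b - s1^2)/(a * dl), s2/dl], vector [- s1/dl, s2/dl, a/dl]] :: real^3^3) **
     (vector [vector [a, 0, s1], vector [0, a, - s2], vector [s1, - s2, b]] :: real^3^3)  = mat 1"
proof -
  have "a \<noteq> 0" "dl \<noteq> 0" using assms by auto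
  moreover have "b = (dl + s1^2 + s2^2) / a" using assms by (simp add: field_simps)
  ultimately show ?thesis
    by (simp add: matrix_matrix_mult_def vec_eq_iff forall_3 sum_3 mat_def, simp add: field_simps power2_eq_square)
qed
lemma lapl_comp:
  fixes a b s1 s2 dl :: real and c d e :: complex
  assumes "a \<noteq> 0" "dl \<noteq> 0" "b = (dl + s1^2 + s2^2) / a"
  shows "(of_real ((a * b - s2^2)/(a * dl)) * c + of_real (- s1 * s2/(a * dl)) * (\<i> * c) + of_real (- s1/dl) * d)
    + (of_real (- s1 * s2/(a * dl)) * (\<i> * c) + of_real ((a * b - s1^2)/(a * dl)) * (\<i> * (\<i> * c)) + of_real (s2/dl) * (\<i> * d))
    + (of_real (- s1/dl) * d + of_real (s2/dl) * (\<i> * d) + of_real (a/dl) * e)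
    = of_real (1/dl) * ((of_real s1 - \<i> * of_real s2)^2 / of_real a * c - 2 * (of_real s1 - \<i> * of_real s2) * d + of_real a * e)"
  using assms by (simp add: complex_eq_iff field_simps power2_eq_square)
lemma lapl_vec:
  fixes a b s1 s2 dl :: real and C D E :: "complex \<times> complex"
  assumes "a \<noteq> 0" "dl \<noteq> 0" "b = (dl + s1^2 + s2^2) / a"
  shows "(((a * b - s2^2)/(a * dl)) *\<^sub>R C + (- s1 * s2/(a * dl)) *\<^sub>R cm \<i> C + (- s1/dl) *\<^sub>R D)
    + ((- s1 * s2/(a * dl)) *\<^sub>R cm \<i> C + ((a * b - s1^2)/(a * dl)) *\<^sub>R cm \<i> (cm \<i> C) + (s2/dl) *\<^sub>R cm \<i> D)
    + ((- s1/dl) *\<^sub>R D + (s2/dl) *\<^sub>R cm \<i> D + (a/dl) *\<^sub>R E)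
    = (1/dl) *\<^sub>R (cm ((of_real s1 - \<i> * of_real s2)^2 / of_real a) C - cm (2 * (of_real s1 - \<i> * of_real s2)) D + cm (of_real a) E)"
  unfolding prod_eq_iff
  apply (simp only: fst_add snd_add fst_diff snd_diff fst_scaleR snd_scaleR cm_def fst_conv snd_conv scaleR_conv_of_real)
  apply (intro conjI; rule trans[OF lapl_comp[OF assms]]; simp add: algebra_simps)
  done

lemma laplace_formula:
  fixes F :: "real^3 \<Rightarrow> complex \<times> complex"
  assumes P: "partial F 1 p = A" "partial F 2 p = cm \<i> A" "partial F 3 p = B"
    "partial (partial F 1) 1 p = C" "partial (partial F 1) 2 p = cm \<i> C" "partial (partial F 1) 3 p = D"
    "partial (partial F 2) 1 p = cm \<i> C" "partial (partial F 2) 2 p = cm \<i> (cm \<i> C)" "partial (partial F 2) 3 p = cm \<i> D"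
    "partial (partial F 3) 1 p = D" "partial (partial F 3) 2 p = cm \<i> D" "partial (partial F 3) 3 p = E"
    and nz: "om A B \<noteq> 0"
  shows "laplace_vec F p = (1 / (cmod (om A B))^2) *\<^sub>R
     (cm ((cnj (hh A B))^2 / of_real (Re (hh A A))) C - cm (2 * cnj (hh A B)) D + cm (of_real (Re (hh A A))) E)"
proof -
  define a where "a = Re (hh A A)"
  define b where "b = Re (hh B B)"
  define s1 where "s1 = Re (hh A B)"
  define s2 where "s2 = Im (hh A B)"
  define dl where "dl = (cmod (om A B))^2"
  have dl: "dl = a * b - s1^2 - s2^2" unfolding dl_def a_def b_def s1_def s2_def by (simp add: lagrange)
  have dlpos: "dl > 0" using nz unfolding dl_def by simp
  have apos: "a > 0"
  proof -
    have "A \<noteq> 0" using nz by (auto simp: om_def)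
    moreover have "a = (cmod (fst A))^2 + (cmod (snd A))^2"
      unfolding a_def hh_def by (simp add: cmod_power2 flip: power2_eq_square)
    ultimately show ?thesis
      by (cases A) (auto simp: zero_prod_def add_pos_nonneg add_nonneg_pos)
  qed
  have G: "metric3 F p = vector [vector [a, 0, s1], vector [0, a, - s2], vector [s1, - s2, b]]"
    by (simp add: metric3_def vec_eq_iff forall_3 P inner_hh a_def b_def s1_def s2_def hh_def cm_def
        algebra_simps)
  define Gi where "Gi = (vector [vector [(a * b - s2^2)/(a * dl), - s1 * s2/(a * dl), - s1/dl],
       vector [- s1 * s2/(a * dl), (a * b - s1^2)/(a * dl), s2/dl], vector [- s1/dl, s2/dl, a/dl]] :: real^3^3)"
  have bdef: "b = (dl + s1^2 + s2^2) / a" using dl apos by (simp add: field_simps)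
  have inv: "matrix_inv (metric3 F p) = Gi"
    unfolding G Gi_def
    by (rule matrix_inv_eq; rule ginv ginv2; (rule apos dl dlpos))
  have cs: "cnj (hh A B) = of_real s1 - \<i> * of_real s2"
    by (simp add: complex_eq_iff s1_def s2_def)
  show ?thesis
    unfolding laplace_vec_def inv sum_3 P
    unfolding Gi_def vector_3 cs a_def[symmetric] dl_def[symmetric]
    by (rule lapl_vec[OF _ _ bdef]) (use apos dlpos in auto)
qed



lemma hh_normal: "hh (cm c (- cnj (snd A), cnj (fst A))) X = c * cnj (om A X)"
  by (simp add: hh_def om_def cm_def algebra_simps)

lemma hh_cmi: "Re (hh X (cm \<i> A)) = Im (hh X A)"
  by (simp add: hh_def cm_def)

lemma hh_scaleR: "hh X (r *\<^sub>R Y) = of_real r * hh X Y"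
  by (simp add: hh_def scaleR_conv_of_real algebra_simps)

lemma om_cm: "om A (cm c X) = c * om A X"
  by (simp add: om_def cm_def algebra_simps)

lemma key_id: "om A B * cnj (hh v M) - om A M * cnj (hh v B) = om M B * cnj (hh v A)"
  by (simp add: hh_def om_def algebra_simps)

lemma minimal_criterion:
  fixes F :: "real^3 \<Rightarrow> complex \<times> complex"
  assumes L: "laplace_vec F p = (1/dl) *\<^sub>R M" and dl: "dl > 0"
    and P: "partial F 1 p = A" "partial F 2 p = cm \<i> A" "partial F 3 p = B"
    and nz: "om A B \<noteq> 0"
  shows "(\<forall>\<nu>. (\<forall>i. inner \<nu> (partial F i p) = 0) \<longrightarrow> inner \<nu> (laplace_vec F p) = 0)
     \<longleftrightarrow> Im (om A B * cnj (om A M)) = 0"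
proof
  assume H: "\<forall>\<nu>. (\<forall>i. inner \<nu> (partial F i p) = 0) \<longrightarrow> inner \<nu> (laplace_vec F p) = 0"
  define \<nu> where "\<nu> = cm (\<i> * om A B) (- cnj (snd A), cnj (fst A))"
  have "om A A = 0" by (simp add: om_def)
  have "\<forall>i. inner \<nu> (partial F i p) = 0"
    unfolding forall_3 P inner_hh \<nu>_def hh_normal om_cm \<open>om A A = 0\<close> by simp
  then have "inner \<nu> (laplace_vec F p) = 0" using H by blast
  then have "Re (\<i> * om A B * cnj (om A M)) = 0"
    unfolding L inner_hh hh_scaleR \<nu>_def hh_normal using dl by simp
  then show "Im (om A B * cnj (om A M)) = 0" by simp
next
  assume H: "Im (om A B * cnj (om A M)) = 0"
  show "\<forall>\<nu>. (\<forall>i. inner \<nu> (partial F i p) = 0) \<longrightarrow> inner \<nu> (laplace_vec F p) = 0"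
  proof (intro allI impI)
    fix v assume "\<forall>i. inner v (partial F i p) = 0"
    then have h: "Re (hh v A) = 0" "Im (hh v A) = 0" "Re (hh v B) = 0"
      unfolding forall_3 P inner_hh hh_cmi by auto
    then have "hh v A = 0" by (simp add: complex_eq_iff)
    then have k: "om A B * cnj (hh v M) = om A M * cnj (hh v B)"
      using key_id[of A B v M] by simp
    define w where "w = om A B * cnj (om A M)"
    have w: "w = of_real (Re w)" using H unfolding w_def by (simp add: complex_eq_iff)
    have "hh v M * cnj (om A B) = cnj (om A M) * hh v B"
      using arg_cong[OF k, of cnj] by (simp add: mult.commute)
    then have "hh v M * (cnj (om A B) * om A B) = w * hh v B"
    proof -
      assume e: "hh v M * cnj (om A B) = cnj (om A M) * hh v B"
      have "hh v M * (cnj (om A B) * om A B) = (hh v M * cnj (om A B)) * om A B"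
        by (simp only: mult.assoc)
      also have "\<dots> = (cnj (om A M) * hh v B) * om A B" by (simp only: e)
      also have "\<dots> = w * hh v B" unfolding w_def by (simp only: ac_simps)
      finally show ?thesis .
    qed
    also have "\<dots> = of_real (Re w) * hh v B" using w by simp
    finally have "Re (hh v M * (cnj (om A B) * om A B)) = 0" using h(3) by simp
    moreover have "cnj (om A B) * om A B = of_real ((cmod (om A B))^2)"
      by (metis complex_norm_square mult.commute)
    ultimately have "Re (hh v M) * (cmod (om A B))^2 = 0" by simp
    then have "Re (hh v M) = 0" using nz by simp
    then show "inner v (laplace_vec F p) = 0"
      unfolding L inner_hh hh_scaleR by simp
  qed
qed


lemma d_nth: "((\<lambda>q::real^3. q $ i) has_derivative (\<lambda>h. h $ i)) F"
  by (rule bounded_linear.has_derivative[OF bounded_linear_vec_nth has_derivative_ident])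

lemma d_wpar: "(wpar has_derivative (\<lambda>h. Complex (h$1) (h$2))) F"
  unfolding wpar_def Complex_eq
  by (rule derivative_eq_intros d_nth refl)+

lemma d_cexp:
  assumes "(g has_derivative g') (at q)"
  shows "((\<lambda>q. exp (g q :: complex)) has_derivative (\<lambda>h. exp (g q) * g' h)) (at q)"
  using has_derivative_compose[OF assms DERIV_exp[unfolded has_field_derivative_def]]
  by (simp add: mult.commute)

lemma d_comp3:
  fixes x :: "real \<Rightarrow> real"
  assumes "(x has_real_derivative x') (at (q$3))"
  shows "((\<lambda>q::real^3. x (q$3)) has_derivative (\<lambda>h. x' * h$3)) (at q)"
  using has_derivative_compose[OF d_nth assms[unfolded has_field_derivative_def]]
  by (simp add: mult.commute)

lemma dc_F: "(hyp_c has_derivative (\<lambda>h. h$1 *\<^sub>R (1, of_real (q$3) * exp (wpar q))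
   + h$2 *\<^sub>R cm \<i> (1, of_real (q$3) * exp (wpar q)) + h$3 *\<^sub>R (0, exp (wpar q)))) (at q)"
  unfolding hyp_c_def
  apply (rule has_derivative_eq_rhs)
   apply (rule derivative_eq_intros d_wpar d_nth d_cexp refl)+
  apply (rule ext)
  apply (simp add: cm_def prod_eq_iff scaleR_conv_of_real Complex_eq algebra_simps)
  done



definition MM where "MM A B C D E =
  cm ((cnj (hh A B))^2 / of_real (Re (hh A A))) C - cm (2 * cnj (hh A B)) D + cm (of_real (Re (hh A A))) E"

lemma om_MM: "om A (MM A B C D E) = (cnj (hh A B))^2 / of_real (Re (hh A A)) * om A C
   - 2 * cnj (hh A B) * om A D + of_real (Re (hh A A)) * om A E"
  by (simp add: MM_def om_def cm_def divide_inverse algebra_simps)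

lemma levi_minimal:
  fixes F A B C D E :: "real^3 \<Rightarrow> complex \<times> complex"
  assumes U: "open U"
    and dF: "\<And>q. q \<in> U \<Longrightarrow> (F has_derivative (\<lambda>h. h$1 *\<^sub>R A q + h$2 *\<^sub>R cm \<i> (A q) + h$3 *\<^sub>R B q)) (at q)"
    and dA: "\<And>q. q \<in> U \<Longrightarrow> (A has_derivative (\<lambda>h. h$1 *\<^sub>R C q + h$2 *\<^sub>R cm \<i> (C q) + h$3 *\<^sub>R D q)) (at q)"
    and dB: "\<And>q. q \<in> U \<Longrightarrow> (B has_derivative (\<lambda>h. h$1 *\<^sub>R D q + h$2 *\<^sub>R cm \<i> (D q) + h$3 *\<^sub>R E q)) (at q)"
    and nz: "\<And>q. q \<in> U \<Longrightarrow> om (A q) (B q) \<noteq> 0"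
  shows "minimal_hypersurface U F \<longleftrightarrow>
    (\<forall>q\<in>U. Im (om (A q) (B q) * cnj (om (A q) (MM (A q) (B q) (C q) (D q) (E q)))) = 0)"
  unfolding minimal_hypersurface_def
proof (intro ball_cong refl)
  fix q assume q: "q \<in> U"
  note SP = second_partials[OF U q dF dA[OF q] dB[OF q]]
  have L: "laplace_vec F q = (1 / (cmod (om (A q) (B q)))^2) *\<^sub>R MM (A q) (B q) (C q) (D q) (E q)"
    unfolding MM_def by (rule laplace_formula[OF SP nz[OF q]])
  show "(\<forall>\<nu>. (\<forall>i. inner \<nu> (partial F i q) = 0) \<longrightarrow> inner \<nu> (laplace_vec F q) = 0) \<longleftrightarrow>
    Im (om (A q) (B q) * cnj (om (A q) (MM (A q) (B q) (C q) (D q) (E q)))) = 0"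
    by (rule minimal_criterion[OF L _ SP(1-3) nz[OF q]]) (use nz[OF q] in simp)
qed

lemma levi_immersion:
  fixes F :: "real^3 \<Rightarrow> complex \<times> complex"
  assumes "(F has_derivative (\<lambda>h. h$1 *\<^sub>R A + h$2 *\<^sub>R cm \<i> A + h$3 *\<^sub>R B)) (at q)"
    and nz: "om A B \<noteq> 0"
  shows "F differentiable (at q) \<and> inj (frechet_derivative F (at q))"
proof
  show "F differentiable (at q)" using assms(1) unfolding differentiable_def by blast
  have fd: "frechet_derivative F (at q) = (\<lambda>h. h$1 *\<^sub>R A + h$2 *\<^sub>R cm \<i> A + h$3 *\<^sub>R B)"
    using frechet_derivative_at[OF assms(1)] by simp
  have lin: "linear (frechet_derivative F (at q))"
    using assms(1) fd has_derivative_linear by fastforce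
  show "inj (frechet_derivative F (at q))"
    unfolding linear_injective_0[OF lin]
  proof (intro allI impI)
    fix h :: "real^3" assume "frechet_derivative F (at q) h = 0"
    then have e: "h$1 *\<^sub>R A + h$2 *\<^sub>R cm \<i> A + h$3 *\<^sub>R B = 0" using fd by simp
    then have "om A (h$1 *\<^sub>R A + h$2 *\<^sub>R cm \<i> A + h$3 *\<^sub>R B) = 0" by (simp add: om_def)
    then have "of_real (h$3) * om A B = 0"
      by (simp add: om_def cm_def scaleR_conv_of_real algebra_simps)
    then have h3: "h$3 = 0" using nz by simp
    then have "(of_real (h$1) + \<i> * of_real (h$2)) * fst A = 0 \<and> (of_real (h$1) + \<i> * of_real (h$2)) * snd A = 0"
      using e by (simp add: prod_eq_iff cm_def scaleR_conv_of_real algebra_simps)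
    moreover have "A \<noteq> 0" using nz by (auto simp: om_def)
    ultimately have "of_real (h$1) + \<i> * of_real (h$2) = 0"
      by (cases A) (auto simp: zero_prod_def)
    then have "h$1 = 0" "h$2 = 0" by (simp_all add: complex_eq_iff)
    then show "h = 0" using h3 by (simp add: vec_eq_iff forall_3)
  qed
qed



lemma dc_A: "((\<lambda>q. (1::complex, of_real (q$3) * exp (wpar q))) has_derivative (\<lambda>h. h$1 *\<^sub>R (0, of_real (q$3) * exp (wpar q))
   + h$2 *\<^sub>R cm \<i> (0, of_real (q$3) * exp (wpar q)) + h$3 *\<^sub>R (0, exp (wpar q)))) (at q)"
  apply (rule has_derivative_eq_rhs)
   apply (rule derivative_eq_intros d_wpar d_nth d_cexp refl)+
  apply (rule ext)
  apply (simp add: cm_def prod_eq_iff scaleR_conv_of_real Complex_eq algebra_simps)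
  done

lemma dc_B: "((\<lambda>q. (0::complex, exp (wpar q))) has_derivative (\<lambda>h. h$1 *\<^sub>R (0, exp (wpar q))
   + h$2 *\<^sub>R cm \<i> (0, exp (wpar q)) + h$3 *\<^sub>R (0, 0))) (at q)"
  apply (rule has_derivative_eq_rhs)
   apply (rule derivative_eq_intros d_wpar d_nth d_cexp refl)+
  apply (rule ext)
  apply (simp add: cm_def prod_eq_iff scaleR_conv_of_real Complex_eq algebra_simps)
  done

lemma crit_c: "Im (om (1, of_real r * z) (0, z) * cnj (om (1, of_real r * z)
   (MM (1, of_real r * z) (0, z) (0, of_real r * z) (0, z) (0, 0)))) = 0"
proof -
  have zz: "z * cnj z = of_real ((cmod z)^2)" by (metis complex_norm_square)
  have h: "hh (1, of_real r * z) (0, z) = of_real (r * (cmod z)^2)"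
    by (simp add: hh_def zz mult.assoc)
  have a: "of_real (Re (hh (1, of_real r * z) (1, of_real r * z))) = (of_real (1 + r^2 * (cmod z)^2) :: complex)"
  proof -
    have "Re (hh (1, of_real r * z) (1, of_real r * z)) = 1 + r^2 * (cmod z)^2"
      by (simp add: hh_def cmod_power2, simp add: power2_eq_square algebra_simps)
    then show ?thesis by simp
  qed
  show ?thesis
    unfolding om_MM h a by (simp add: om_def zz algebra_simps)
qed

lemma hyp_c_minimal: "minimal_hypersurface UNIV hyp_c"
proof -
  have "minimal_hypersurface UNIV hyp_c \<longleftrightarrow> (\<forall>q\<in>UNIV. Im (om (1, of_real (q$3) * exp (wpar q)) (0, exp (wpar q)) *
     cnj (om (1, of_real (q$3) * exp (wpar q)) (MM (1, of_real (q$3) * exp (wpar q)) (0, exp (wpar q))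
       (0, of_real (q$3) * exp (wpar q)) (0, exp (wpar q)) (0,0)))) = 0)"
    by (rule levi_minimal[where A="\<lambda>q. (1, of_real (q$3) * exp (wpar q))" and B="\<lambda>q. (0, exp (wpar q))"
      and C="\<lambda>q. (0, of_real (q$3) * exp (wpar q))" and D="\<lambda>q. (0, exp (wpar q))" and E="\<lambda>q. (0,0)"],
      simp, rule dc_F, rule dc_A, rule dc_B, simp add: om_def)
  then show ?thesis by (simp only: crit_c) simp
qed

lemma hyp_c_immersion: "immersion3 UNIV hyp_c"
  unfolding immersion3_def
  by (auto intro!: levi_immersion[OF dc_F] simp: om_def)



definition Gc :: "complex \<times> complex \<Rightarrow> real^3" where
  "Gc z = Re (fst z) *\<^sub>R axis 1 1 + Im (fst z) *\<^sub>R axis 2 1 + Re (snd z * exp (- fst z)) *\<^sub>R axis 3 1"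

lemma Gc_nth: "Gc z $ 1 = Re (fst z)" "Gc z $ 2 = Im (fst z)" "Gc z $ 3 = Re (snd z * exp (- fst z))"
  by (simp_all add: Gc_def axis_def)

lemma hyp_c_cont: "continuous_on UNIV hyp_c"
  by (rule differentiable_imp_continuous_on) (auto simp: differentiable_on_def differentiable_def intro: dc_F)

lemma part_c_top:
  defines "S \<equiv> {z :: complex \<times> complex. Im (snd z * exp (- fst z)) = 0}"
  shows "closed S \<and> range hyp_c = S \<and> (\<exists>G. homeomorphism UNIV S hyp_c G)"
proof -
  have cl: "closed S" unfolding S_def
    by (rule closed_Collect_eq) (intro continuous_intros)+
  have left: "Gc (hyp_c p) = p" for p
  proof -
    have "exp (wpar p) * exp (- wpar p) = 1" by (simp add: exp_minus)
    then have "of_real (p$3) * exp (wpar p) * exp (- wpar p) = of_real (p$3)"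
      by (simp add: mult.assoc)
    then have "Re (snd (hyp_c p) * exp (- fst (hyp_c p))) = p$3"
      by (simp only: hyp_c_def fst_conv snd_conv) simp
    then show ?thesis
      by (simp add: vec_eq_iff forall_3 Gc_nth) (simp add: hyp_c_def wpar_def)
  qed
  have inS: "hyp_c p \<in> S" for p
  proof -
    have "exp (wpar p) * exp (- wpar p) = 1" by (simp add: exp_minus)
    then have "of_real (p$3) * exp (wpar p) * exp (- wpar p) = of_real (p$3)"
      by (simp add: mult.assoc)
    then have "Im (snd (hyp_c p) * exp (- fst (hyp_c p))) = 0"
      by (simp only: hyp_c_def fst_conv snd_conv) simp
    then show ?thesis by (simp add: S_def)
  qed
  have right: "hyp_c (Gc z) = z" if "z \<in> S" for z
  proof -
    have w: "wpar (Gc z) = fst z" by (simp add: wpar_def Gc_nth complex_eq_iff)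
    have r: "of_real (Re (snd z * exp (- fst z))) = snd z * exp (- fst z)"
      using that by (simp add: S_def complex_eq_iff)
    have "snd z * exp (- fst z) * exp (fst z) = snd z"
      by (simp add: mult.assoc exp_minus)
    then show ?thesis
      unfolding hyp_c_def w Gc_nth r by (simp add: prod_eq_iff)
  qed
  have rng: "range hyp_c = S"
    using inS right by (metis image_subsetI subsetI subset_antisym rangeI)
  have "homeomorphism UNIV S hyp_c Gc"
    unfolding homeomorphism_def
  proof (intro conjI ballI)
    show "continuous_on UNIV hyp_c" by (rule hyp_c_cont)
    show "hyp_c ` UNIV = S" by (rule rng)
    show "continuous_on S Gc" unfolding Gc_def by (intro continuous_intros)
    show "Gc ` S = UNIV" using left inS by (metis image_eqI subsetI subset_antisym top_greatest)
  qed (use left right in auto)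
  then show ?thesis using cl rng by blast
qed


lemma crit_b_alg:
  fixes e b g :: complex and lam a :: real
  assumes a: "Re (hh (1,e) (1,e)) = a" and a0: "a \<noteq> 0"
  shows "Im (om (1, e) (b, 0) * cnj (om (1, e) (MM (1, e) (b, 0) (0, of_real lam * e) (0, 0) (g, 0))))
    = (cmod e)^2 * (lam * (cmod b)^2 * Im b / a + a * (Im b * Re g - Re b * Im g))"
  unfolding om_MM a cmod_power2
  using a0 by (simp add: om_def hh_def cmod_power2 Im_divide power2_eq_square field_simps)

lemma crit_a_alg:
  fixes f e b g :: complex and lam a :: real
  assumes a: "Re (hh (f,e) (f,e)) = a" and a0: "a \<noteq> 0"
  shows "Im (om (f, e) (f * b, 0) * cnj (om (f, e) (MM (f, e) (f * b, 0) (f, of_real lam * e) (f * b, 0) (f * (b^2 + g), 0))))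
    = (cmod f)^2 * (cmod e)^2 * ((cmod b)^2 * Im b * (((cmod f)^2)^2 * (lam - 1) / a + 2 * (cmod f)^2 - a)
       + a * (Im b * Re g - Re b * Im g))"
  unfolding om_MM a cmod_power2
  using a0 by (simp add: om_def hh_def Im_divide power2_eq_square field_simps)



lemma d_cpx3:
  assumes "(x has_real_derivative x1) (at (q$3))" "(y has_real_derivative y1) (at (q$3))"
  shows "((\<lambda>q::real^3. Complex (x (q$3)) (y (q$3))) has_derivative (\<lambda>h. of_real (h$3) * Complex x1 y1)) (at q)"
  unfolding Complex_eq
  apply (rule has_derivative_eq_rhs)
   apply (rule derivative_eq_intros d_comp3[OF assms(1)] d_comp3[OF assms(2)] refl)+
  apply (rule ext)
  apply (simp add: Complex_eq algebra_simps)
  done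

lemma db_F:
  assumes "(x has_real_derivative x1) (at (q$3))" "(y has_real_derivative y1) (at (q$3))"
  shows "(hyp_b lam x y has_derivative (\<lambda>h. h$1 *\<^sub>R (1, of_real lam * exp (of_real lam * wpar q))
    + h$2 *\<^sub>R cm \<i> (1, of_real lam * exp (of_real lam * wpar q)) + h$3 *\<^sub>R (Complex x1 y1, 0))) (at q)"
  unfolding hyp_b_def
  apply (rule has_derivative_eq_rhs)
   apply (rule derivative_eq_intros d_wpar d_cpx3[OF assms] d_cexp refl)+
  apply (rule ext)
  apply (simp add: cm_def prod_eq_iff scaleR_conv_of_real Complex_eq algebra_simps)
  done

lemma db_A:
  shows "((\<lambda>q. (1::complex, of_real lam * exp (of_real lam * wpar q))) has_derivative (\<lambda>h. h$1 *\<^sub>R (0, of_real lam * (of_real lam * exp (of_real lam * wpar q)))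
    + h$2 *\<^sub>R cm \<i> (0, of_real lam * (of_real lam * exp (of_real lam * wpar q))) + h$3 *\<^sub>R (0, 0))) (at q)"
  apply (rule has_derivative_eq_rhs)
   apply (rule derivative_eq_intros d_wpar d_cexp refl)+
  apply (rule ext)
  apply (simp add: cm_def prod_eq_iff scaleR_conv_of_real Complex_eq algebra_simps)
  done

lemma db_B:
  fixes q :: "real^3"
  assumes "(x' has_real_derivative x2) (at (q$3))" "(y' has_real_derivative y2) (at (q$3))"
  shows "((\<lambda>q. (Complex (x' (q$3)) (y' (q$3)), 0::complex)) has_derivative (\<lambda>h. h$1 *\<^sub>R (0, 0)
    + h$2 *\<^sub>R cm \<i> (0, 0) + h$3 *\<^sub>R (Complex x2 y2, 0))) (at q)"
  apply (rule has_derivative_eq_rhs)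
   apply (rule derivative_eq_intros d_cpx3[OF assms] refl)+
  apply (rule ext)
  apply (simp add: cm_def prod_eq_iff scaleR_conv_of_real Complex_eq algebra_simps)
  done

lemma da_F:
  assumes "(x has_real_derivative x1) (at (q$3))" "(y has_real_derivative y1) (at (q$3))"
  shows "(hyp_a lam x y has_derivative (\<lambda>h. h$1 *\<^sub>R (exp (wpar q + Complex (x (q$3)) (y (q$3))), of_real lam * exp (of_real lam * wpar q))
    + h$2 *\<^sub>R cm \<i> (exp (wpar q + Complex (x (q$3)) (y (q$3))), of_real lam * exp (of_real lam * wpar q))
    + h$3 *\<^sub>R (exp (wpar q + Complex (x (q$3)) (y (q$3))) * Complex x1 y1, 0))) (at q)"
  unfolding hyp_a_def
  apply (rule has_derivative_eq_rhs)
   apply (rule derivative_eq_intros d_wpar d_cpx3[OF assms] d_cexp refl)+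
  apply (rule ext)
  apply (simp add: cm_def prod_eq_iff scaleR_conv_of_real Complex_eq algebra_simps)
  done

lemma da_A:
  assumes "(x has_real_derivative x1) (at (q$3))" "(y has_real_derivative y1) (at (q$3))"
  shows "((\<lambda>q. (exp (wpar q + Complex (x (q$3)) (y (q$3))), of_real lam * exp (of_real lam * wpar q))) has_derivative
    (\<lambda>h. h$1 *\<^sub>R (exp (wpar q + Complex (x (q$3)) (y (q$3))), of_real lam * (of_real lam * exp (of_real lam * wpar q)))
    + h$2 *\<^sub>R cm \<i> (exp (wpar q + Complex (x (q$3)) (y (q$3))), of_real lam * (of_real lam * exp (of_real lam * wpar q)))
    + h$3 *\<^sub>R (exp (wpar q + Complex (x (q$3)) (y (q$3))) * Complex x1 y1, 0))) (at q)"
  apply (rule has_derivative_eq_rhs)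
   apply (rule derivative_eq_intros d_wpar d_cpx3[OF assms] d_cexp refl)+
  apply (rule ext)
  apply (simp add: cm_def prod_eq_iff scaleR_conv_of_real Complex_eq algebra_simps)
  done

lemma da_B:
  assumes "(x has_real_derivative x1) (at (q$3))" "(y has_real_derivative y1) (at (q$3))"
    "(x' has_real_derivative x2) (at (q$3))" "(y' has_real_derivative y2) (at (q$3))"
    "x' (q$3) = x1" "y' (q$3) = y1"
  shows "((\<lambda>q. (exp (wpar q + Complex (x (q$3)) (y (q$3))) * Complex (x' (q$3)) (y' (q$3)), 0::complex)) has_derivative
    (\<lambda>h. h$1 *\<^sub>R (exp (wpar q + Complex (x (q$3)) (y (q$3))) * Complex x1 y1, 0)
    + h$2 *\<^sub>R cm \<i> (exp (wpar q + Complex (x (q$3)) (y (q$3))) * Complex x1 y1, 0)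
    + h$3 *\<^sub>R (exp (wpar q + Complex (x (q$3)) (y (q$3))) * ((Complex x1 y1)^2 + Complex x2 y2), 0))) (at q)"
  apply (rule has_derivative_eq_rhs)
   apply (rule derivative_eq_intros d_wpar d_cpx3[OF assms(1,2)] d_cpx3[OF assms(3,4)] d_cexp refl)+
  apply (rule ext)
  apply (simp add: cm_def prod_eq_iff scaleR_conv_of_real Complex_eq algebra_simps power2_eq_square assms(5,6))
  done



lemma openU: "open I \<Longrightarrow> open {p::real^3. p$3 \<in> I}"
proof -
  assume "open I"
  have "{p::real^3. p$3 \<in> I} = (\<lambda>p. p$3) -` I" by auto
  moreover have "continuous_on UNIV (\<lambda>p::real^3. p$3)" by (intro continuous_intros)
  ultimately show ?thesis using open_vimage[OF \<open>open I\<close>] by simp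
qed

lemma smooth_D:
  assumes "smooth_on I f" "t \<in> I"
  shows "(f has_real_derivative deriv f t) (at t)" "(deriv f has_real_derivative deriv (deriv f) t) (at t)"
proof -
  have "((deriv ^^ 0) f) differentiable (at t)" "((deriv ^^ 1) f) differentiable (at t)"
    using assms unfolding smooth_on_def by blast+
  then show "(f has_real_derivative deriv f t) (at t)" "(deriv f has_real_derivative deriv (deriv f) t) (at t)"
    by (simp_all add: DERIV_deriv_iff_real_differentiable)
qed

lemma const_derivs:
  fixes f :: "real \<Rightarrow> real"
  assumes "open I" "\<forall>r\<in>I. f r = c" "t \<in> I"
  shows "deriv f t = 0" "deriv (deriv f) t = 0"
proof -
  have d0: "deriv f s = 0" if "s \<in> I" for s
  proof -
    have "((\<lambda>_. c) has_real_derivative 0) (at s)" by simp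
    then have "(f has_real_derivative 0) (at s)"
      by (rule has_field_derivative_transform_within_open[OF _ assms(1) that]) (use assms(2) in auto)
    then show ?thesis by (rule DERIV_imp_deriv)
  qed
  show "deriv f t = 0" using d0 assms(3) .
  have "((\<lambda>_. 0) has_real_derivative 0) (at t)" by simp
  then have "(deriv f has_real_derivative 0) (at t)"
    by (rule has_field_derivative_transform_within_open[OF _ assms(1) assms(3)]) (use d0 in auto)
  then show "deriv (deriv f) t = 0" by (rule DERIV_imp_deriv)
qed

lemma const_from_derivs:
  assumes "open I" "connected I" "smooth_on I y" "\<forall>r\<in>I. deriv y r = 0"
  shows "\<exists>c. \<forall>r\<in>I. y r = c"
proof -
  have "continuous_on I y"
    using smooth_D(1)[OF assms(3)] by (meson DERIV_isCont continuous_at_imp_continuous_on)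
  moreover have "\<forall>r\<in>I - {}. (y has_real_derivative 0) (at r)"
    using smooth_D(1)[OF assms(3)] assms(4) by fastforce
  ultimately obtain c where "\<And>r. r \<in> I \<Longrightarrow> y r = c"
    using DERIV_zero_connected_constant[OF assms(2,1) finite.emptyI] by blast
  then show ?thesis by blast
qed

lemma two_vals:
  fixes L k a1 a2 :: real
  assumes "L + a1^2 * k = 0" "L + a2^2 * k = 0" "a1 \<noteq> a2" "a1 > 0" "a2 > 0"
  shows "k = 0 \<and> L = 0"
proof -
  have "(a1^2 - a2^2) * k = (L + a1^2 * k) - (L + a2^2 * k)" by (simp add: algebra_simps)
  also have "\<dots> = 0" using assms(1,2) by simp
  finally have "(a1^2 - a2^2) * k = 0" .
  moreover have "a1^2 - a2^2 \<noteq> 0" using assms(3-5) power2_eq_iff_nonneg[of a1 a2] by simp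
  ultimately have "k = 0" by simp
  then show ?thesis using assms(1) by simp
qed

lemma hh1e: "Re (hh (1, e) (1, e)) = 1 + (cmod e)^2"
  by (simp add: hh_def cmod_power2) (simp add: power2_eq_square)

lemma cmod_e: "cmod (of_real lam * exp (of_real lam * wpar q)) = \<bar>lam\<bar> * exp (lam * q$1)"
  by (simp add: norm_mult wpar_def)

lemma part_b:
  assumes I: "open I" "connected I" and sx: "smooth_on I x" and sy: "smooth_on I y"
    and imm: "\<forall>t\<in>I. deriv x t \<noteq> 0 \<or> deriv y t \<noteq> 0" and lam: "lam \<noteq> 0"
  shows "minimal_hypersurface {p. p$3 \<in> I} (hyp_b lam x y) \<longleftrightarrow> (\<exists>c. \<forall>r\<in>I. y r = c)"
proof -
  let ?U = "{p::real^3. p$3 \<in> I}"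
  have crit: "minimal_hypersurface ?U (hyp_b lam x y) \<longleftrightarrow> (\<forall>q\<in>?U.
     Im (om (1, of_real lam * exp (of_real lam * wpar q)) (Complex (deriv x (q$3)) (deriv y (q$3)), 0) *
       cnj (om (1, of_real lam * exp (of_real lam * wpar q))
        (MM (1, of_real lam * exp (of_real lam * wpar q)) (Complex (deriv x (q$3)) (deriv y (q$3)), 0)
            (0, of_real lam * (of_real lam * exp (of_real lam * wpar q))) (0, 0)
            (Complex (deriv (deriv x) (q$3)) (deriv (deriv y) (q$3)), 0)))) = 0)"
  proof (rule levi_minimal[where A="\<lambda>q. (1, of_real lam * exp (of_real lam * wpar q))"
      and B="\<lambda>q. (Complex (deriv x (q$3)) (deriv y (q$3)), 0)"
      and C="\<lambda>q. (0, of_real lam * (of_real lam * exp (of_real lam * wpar q)))" and D="\<lambda>q. (0, 0)"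
      and E="\<lambda>q. (Complex (deriv (deriv x) (q$3)) (deriv (deriv y) (q$3)), 0)"])
    show "open ?U" using openU[OF I(1)] .
    fix q :: "real^3" assume q: "q \<in> ?U"
    then have t: "q$3 \<in> I" by simp
    show "(hyp_b lam x y has_derivative (\<lambda>h. h$1 *\<^sub>R (1, of_real lam * exp (of_real lam * wpar q))
      + h$2 *\<^sub>R cm \<i> (1, of_real lam * exp (of_real lam * wpar q)) + h$3 *\<^sub>R (Complex (deriv x (q$3)) (deriv y (q$3)), 0))) (at q)"
      by (rule db_F[OF smooth_D(1)[OF sx t] smooth_D(1)[OF sy t]])
    show "((\<lambda>q. (1, of_real lam * exp (of_real lam * wpar q))) has_derivative (\<lambda>h. h$1 *\<^sub>R (0, of_real lam * (of_real lam * exp (of_real lam * wpar q)))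
      + h$2 *\<^sub>R cm \<i> (0, of_real lam * (of_real lam * exp (of_real lam * wpar q))) + h$3 *\<^sub>R (0, 0))) (at q)"
      by (rule db_A)
    show "((\<lambda>q. (Complex (deriv x (q$3)) (deriv y (q$3)), 0)) has_derivative (\<lambda>h. h$1 *\<^sub>R (0, 0)
      + h$2 *\<^sub>R cm \<i> (0, 0) + h$3 *\<^sub>R (Complex (deriv (deriv x) (q$3)) (deriv (deriv y) (q$3)), 0))) (at q)"
      by (rule db_B[OF smooth_D(2)[OF sx t] smooth_D(2)[OF sy t]])
    have "Complex (deriv x (q$3)) (deriv y (q$3)) \<noteq> 0" using imm t by (auto simp: complex_eq_iff)
    then show "om (1, of_real lam * exp (of_real lam * wpar q)) (Complex (deriv x (q$3)) (deriv y (q$3)), 0) \<noteq> 0"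
      using lam by (simp add: om_def)
  qed
  define aa where "aa q = 1 + (cmod (of_real lam * exp (of_real lam * wpar q)))^2" for q :: "real^3"
  have aapos: "aa q > 0" for q unfolding aa_def by (simp add: add_pos_nonneg)
  have aaval: "aa q = 1 + (lam * exp (lam * q$1))^2" for q
    unfolding aa_def cmod_e by (simp add: power_mult_distrib)
  define Phi where "Phi q = lam * (deriv x (q$3)^2 + deriv y (q$3)^2) * deriv y (q$3) / aa q
     + aa q * (deriv y (q$3) * deriv (deriv x) (q$3) - deriv x (q$3) * deriv (deriv y) (q$3))" for q :: "real^3"
  have critPhi: "minimal_hypersurface ?U (hyp_b lam x y) \<longleftrightarrow> (\<forall>q\<in>?U. Phi q = 0)"
    unfolding crit
  proof (intro ball_cong refl)
    fix q :: "real^3"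
    have e0: "cmod (of_real lam * exp (of_real lam * wpar q)) \<noteq> 0" using lam by simp
    have cb: "(cmod (Complex (deriv x (q$3)) (deriv y (q$3))))^2 = deriv x (q$3)^2 + deriv y (q$3)^2"
      by (simp add: cmod_power2)
    show "(Im (om (1, of_real lam * exp (of_real lam * wpar q)) (Complex (deriv x (q$3)) (deriv y (q$3)), 0) *
       cnj (om (1, of_real lam * exp (of_real lam * wpar q))
        (MM (1, of_real lam * exp (of_real lam * wpar q)) (Complex (deriv x (q$3)) (deriv y (q$3)), 0)
            (0, of_real lam * (of_real lam * exp (of_real lam * wpar q))) (0, 0)
            (Complex (deriv (deriv x) (q$3)) (deriv (deriv y) (q$3)), 0)))) = 0) = (Phi q = 0)"
      unfolding crit_b_alg[OF hh1e, of "of_real lam * exp (of_real lam * wpar q)", folded aa_def, OF aapos[THEN less_imp_neq, symmetric]]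
      using e0 by (simp add: Phi_def cb)
  qed
  show ?thesis
  proof
    assume "minimal_hypersurface ?U (hyp_b lam x y)"
    then have H: "\<forall>q\<in>?U. Phi q = 0" using critPhi by blast
    have "\<forall>r\<in>I. deriv y r = 0"
    proof (intro ballI, rule ccontr)
      fix r assume r: "r \<in> I" and ny: "deriv y r \<noteq> 0"
      define q0 where "q0 = (vector [0, 0, r] :: real^3)"
      define q1 where "q1 = (vector [1/lam, 0, r] :: real^3)"
      have q0: "q0 \<in> ?U" "q0$3 = r" "q0$1 = 0" and q1: "q1 \<in> ?U" "q1$3 = r" "q1$1 = 1/lam"
        using r by (simp_all add: q0_def q1_def)
      define L where "L = lam * (deriv x r^2 + deriv y r^2) * deriv y r"
      define k where "k = deriv y r * deriv (deriv x) r - deriv x r * deriv (deriv y) r"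
      have eq: "L + (aa q)^2 * k = 0" if "q \<in> ?U" "q$3 = r" for q
      proof -
        have "Phi q = 0" using H that by blast
        moreover have "aa q * Phi q = L + (aa q)^2 * k" using aapos[of q] that(2)
          by (simp add: Phi_def L_def k_def field_simps power2_eq_square)
        ultimately show ?thesis by simp
      qed
      have "(exp (1::real))^2 > 1" by (rule one_less_power) simp_all
      then have ne: "(exp (1::real))^2 \<noteq> 1" by linarith
      have "aa q0 \<noteq> aa q1"
        unfolding aaval q0(3) q1(3) using lam ne by (simp add: power_mult_distrib)
      then have "k = 0 \<and> L = 0" using two_vals[OF eq[OF q0(1,2)] eq[OF q1(1,2)]] aapos by blast
      moreover have "deriv x r^2 + deriv y r^2 > 0" using ny by (simp add: add_nonneg_pos)
      ultimately show False using lam ny by (simp add: L_def)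
    qed
    then show "\<exists>c. \<forall>r\<in>I. y r = c" by (rule const_from_derivs[OF I sy])
  next
    assume "\<exists>c. \<forall>r\<in>I. y r = c"
    then obtain c where c: "\<forall>r\<in>I. y r = c" by blast
    have "Phi q = 0" if "q \<in> ?U" for q
      using const_derivs[OF I(1) c, of "q$3"] that by (simp add: Phi_def)
    then show "minimal_hypersurface ?U (hyp_b lam x y)" using critPhi by blast
  qed
qed



lemma quad3:
  fixes A B C t1 t2 t3 :: real
  assumes "A * t1^2 + B * t1 + C = 0" "A * t2^2 + B * t2 + C = 0" "A * t3^2 + B * t3 + C = 0"
    and "t1 \<noteq> t2" "t1 \<noteq> t3" "t2 \<noteq> t3"
  shows "A = 0 \<and> B = 0 \<and> C = 0"
proof -
  have e12: "(t1 - t2) * (A * (t1 + t2) + B) = 0"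
    using assms(1,2) by (simp add: algebra_simps power2_eq_square)
  have e13: "(t1 - t3) * (A * (t1 + t3) + B) = 0"
    using assms(1,3) by (simp add: algebra_simps power2_eq_square)
  have "A * (t1 + t2) + B = 0" using e12 assms(4) by simp
  moreover have "A * (t1 + t3) + B = 0" using e13 assms(5) by simp
  have "A * (t2 - t3) = (A * (t1 + t2) + B) - (A * (t1 + t3) + B)"
    by (simp add: algebra_simps)
  then have "A * (t2 - t3) = 0" using \<open>A * (t1 + t2) + B = 0\<close> \<open>A * (t1 + t3) + B = 0\<close> by simp
  then have "A = 0" using assms(6) by simp
  then show ?thesis using \<open>A * (t1 + t2) + B = 0\<close> assms(1) by simp
qed

lemma quad_from_phi:
  fixes P Q m k lam :: real
  assumes P: "P > 0" and Q: "Q > 0" and H: "m * (P^2 * (lam - 1) / (P + Q) + 2 * P - (P + Q)) + (P + Q) * k = 0"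
  shows "(m * lam + k) * (P/Q)^2 + (2 * k) * (P/Q) + (k - m) = 0"
proof -
  have "(P + Q) * (m * (P^2 * (lam - 1) / (P + Q) + 2 * P - (P + Q)) + (P + Q) * k)
      = (m * lam + k) * P^2 + 2 * k * P * Q + (k - m) * Q^2"
    using P Q by (simp add: field_simps power2_eq_square)
  then have e: "(m * lam + k) * P^2 + 2 * k * P * Q + (k - m) * Q^2 = 0" using H by simp
  have "(m * lam + k) * (P/Q)^2 + (2 * k) * (P/Q) + (k - m) = ((m * lam + k) * P^2 + 2 * k * P * Q + (k - m) * Q^2) / Q^2"
    using Q by (simp add: field_simps power2_eq_square)
  then show ?thesis using e by simp
qed

lemma ratio:
  fixes u xr lam :: real
  assumes "lam \<noteq> 0"
  shows "(exp (u + xr))^2 / (\<bar>lam\<bar> * exp (lam * u))^2 = (exp xr)^2 / lam^2 * exp (2 * (1 - lam) * u)"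
proof -
  have "exp (2 * (1 - lam) * u) * (exp (lam * u))^2 = (exp u)^2"
    by (simp add: power2_eq_square mult_exp_exp algebra_simps)
  moreover have "(exp (u + xr))^2 = (exp u)^2 * (exp xr)^2" by (simp add: exp_add power_mult_distrib)
  ultimately show ?thesis using assms by (simp add: field_simps power_mult_distrib)
qed

lemma hh_fe: "Re (hh (f, e) (f, e)) = (cmod f)^2 + (cmod e)^2"
  by (simp add: hh_def cmod_power2) (simp add: power2_eq_square)

lemma part_a:
  assumes I: "open I" "connected I" and sx: "smooth_on I x" and sy: "smooth_on I y"
    and imm: "\<forall>t\<in>I. deriv x t \<noteq> 0 \<or> deriv y t \<noteq> 0" and lam: "lam \<noteq> 0" and lam1: "lam \<noteq> 1"
  shows "minimal_hypersurface {p. p$3 \<in> I} (hyp_a lam x y) \<longleftrightarrow> (\<exists>c. \<forall>r\<in>I. y r = c)"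
proof -
  let ?U = "{p::real^3. p$3 \<in> I}"
  define f where "f q = exp (wpar q + Complex (x (q$3)) (y (q$3)))" for q :: "real^3"
  define e where "e q = of_real lam * exp (of_real lam * wpar q)" for q :: "real^3"
  define bb where "bb q = Complex (deriv x (q$3)) (deriv y (q$3))" for q :: "real^3"
  define gg where "gg q = Complex (deriv (deriv x) (q$3)) (deriv (deriv y) (q$3))" for q :: "real^3"
  have crit: "minimal_hypersurface ?U (hyp_a lam x y) \<longleftrightarrow> (\<forall>q\<in>?U.
     Im (om (f q, e q) (f q * bb q, 0) * cnj (om (f q, e q) (MM (f q, e q) (f q * bb q, 0)
       (f q, of_real lam * e q) (f q * bb q, 0) (f q * ((bb q)^2 + gg q), 0)))) = 0)"
  proof (rule levi_minimal[where A="\<lambda>q. (f q, e q)" and B="\<lambda>q. (f q * bb q, 0)"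
      and C="\<lambda>q. (f q, of_real lam * e q)" and D="\<lambda>q. (f q * bb q, 0)"
      and E="\<lambda>q. (f q * ((bb q)^2 + gg q), 0)"])
    show "open ?U" using openU[OF I(1)] .
    fix q :: "real^3" assume q: "q \<in> ?U"
    then have t: "q$3 \<in> I" by simp
    show "(hyp_a lam x y has_derivative (\<lambda>h. h$1 *\<^sub>R (f q, e q)
      + h$2 *\<^sub>R cm \<i> (f q, e q) + h$3 *\<^sub>R (f q * bb q, 0))) (at q)"
      unfolding f_def e_def bb_def by (rule da_F[OF smooth_D(1)[OF sx t] smooth_D(1)[OF sy t]])
    show "((\<lambda>q. (f q, e q)) has_derivative (\<lambda>h. h$1 *\<^sub>R (f q, of_real lam * e q)
      + h$2 *\<^sub>R cm \<i> (f q, of_real lam * e q) + h$3 *\<^sub>R (f q * bb q, 0))) (at q)"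
      unfolding f_def e_def bb_def by (rule da_A[OF smooth_D(1)[OF sx t] smooth_D(1)[OF sy t]])
    show "((\<lambda>q. (f q * bb q, 0)) has_derivative (\<lambda>h. h$1 *\<^sub>R (f q * bb q, 0)
      + h$2 *\<^sub>R cm \<i> (f q * bb q, 0) + h$3 *\<^sub>R (f q * ((bb q)^2 + gg q), 0))) (at q)"
      unfolding f_def bb_def gg_def
      by (rule da_B[OF smooth_D(1)[OF sx t] smooth_D(1)[OF sy t] smooth_D(2)[OF sx t] smooth_D(2)[OF sy t] refl refl])
    have "bb q \<noteq> 0" using imm t by (auto simp: complex_eq_iff bb_def)
    then show "om (f q, e q) (f q * bb q, 0) \<noteq> 0"
      using lam by (simp add: om_def f_def e_def)
  qed
  define PP where "PP q = (cmod (f q))^2" for q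
  define QQ where "QQ q = (cmod (e q))^2" for q
  have PPv: "PP q = (exp (q$1 + x (q$3)))^2" for q by (simp add: PP_def f_def wpar_def)
  have QQv: "QQ q = (\<bar>lam\<bar> * exp (lam * q$1))^2" for q unfolding QQ_def e_def cmod_e ..
  have PPpos: "PP q > 0" for q by (simp add: PPv)
  have QQpos: "QQ q > 0" for q using lam by (simp add: QQv)
  define Phi where "Phi q = (deriv x (q$3)^2 + deriv y (q$3)^2) * deriv y (q$3) *
      ((PP q)^2 * (lam - 1) / (PP q + QQ q) + 2 * PP q - (PP q + QQ q))
     + (PP q + QQ q) * (deriv y (q$3) * deriv (deriv x) (q$3) - deriv x (q$3) * deriv (deriv y) (q$3))" for q :: "real^3"
  have critPhi: "minimal_hypersurface ?U (hyp_a lam x y) \<longleftrightarrow> (\<forall>q\<in>?U. Phi q = 0)"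
    unfolding crit
  proof (intro ball_cong refl)
    fix q :: "real^3"
    have a0: "(cmod (f q))^2 + (cmod (e q))^2 \<noteq> 0"
      using PPpos[of q] QQpos[of q] unfolding PP_def QQ_def by linarith
    have cb: "(cmod (bb q))^2 = deriv x (q$3)^2 + deriv y (q$3)^2"
      by (simp add: cmod_power2 bb_def)
    have pq: "(cmod (f q))^2 * (cmod (e q))^2 \<noteq> 0"
      using PPpos[of q] QQpos[of q] unfolding PP_def QQ_def by simp
    show "(Im (om (f q, e q) (f q * bb q, 0) * cnj (om (f q, e q) (MM (f q, e q) (f q * bb q, 0)
       (f q, of_real lam * e q) (f q * bb q, 0) (f q * ((bb q)^2 + gg q), 0)))) = 0) = (Phi q = 0)"
      unfolding crit_a_alg[OF hh_fe a0] cb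
      using pq by (simp add: Phi_def PP_def QQ_def bb_def gg_def)
  qed
  show ?thesis
  proof
    assume "minimal_hypersurface ?U (hyp_a lam x y)"
    then have H: "\<forall>q\<in>?U. Phi q = 0" using critPhi by blast
    have "\<forall>r\<in>I. deriv y r = 0"
    proof (intro ballI, rule ccontr)
      fix r assume r: "r \<in> I" and ny: "deriv y r \<noteq> 0"
      define m where "m = (deriv x r^2 + deriv y r^2) * deriv y r"
      define k where "k = deriv y r * deriv (deriv x) r - deriv x r * deriv (deriv y) r"
      define c where "c = (exp (x r))^2 / lam^2"
      have cpos: "c > 0" using lam by (simp add: c_def)
      have eq: "(m * lam + k) * (c * exp j)^2 + (2 * k) * (c * exp j) + (k - m) = 0" for j
      proof -
        define q where "q = (vector [j / (2 * (1 - lam)), 0, r] :: real^3)"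
        have q: "q \<in> ?U" "q$3 = r" "q$1 = j / (2 * (1 - lam))" using r by (simp_all add: q_def)
        have "Phi q = 0" using H q(1) by blast
        then have "(m * lam + k) * (PP q / QQ q)^2 + (2 * k) * (PP q / QQ q) + (k - m) = 0"
          by (intro quad_from_phi[OF PPpos QQpos]) (simp add: Phi_def m_def k_def q(2))
        moreover have "PP q / QQ q = c * exp j"
          unfolding PPv QQv q(2) ratio[OF lam] q(3) c_def using lam1 by simp
        ultimately show ?thesis by simp
      qed
      have d: "c * exp 0 \<noteq> c * exp 1" "c * exp 0 \<noteq> c * exp 2" "c * exp 1 \<noteq> c * exp (2::real)"
        using cpos by simp_all
      have "m * lam + k = 0 \<and> 2 * k = 0 \<and> k - m = 0"
        by (rule quad3[OF eq eq eq d])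
      then have "m = 0" by simp
      moreover have "deriv x r^2 + deriv y r^2 > 0" using ny by (simp add: add_nonneg_pos)
      ultimately show False using ny by (simp add: m_def)
    qed
    then show "\<exists>c. \<forall>r\<in>I. y r = c" by (rule const_from_derivs[OF I sy])
  next
    assume "\<exists>c. \<forall>r\<in>I. y r = c"
    then obtain c where c: "\<forall>r\<in>I. y r = c" by blast
    have "Phi q = 0" if "q \<in> ?U" for q
      using const_derivs[OF I(1) c, of "q$3"] that by (simp add: Phi_def)
    then show "minimal_hypersurface ?U (hyp_a lam x y)" using critPhi by blast
  qed
qed


theorem mainTheorem8:
  fixes I :: "real set" and x y :: "real \<Rightarrow> real"
  assumes "open I" and "connected I" and "I \<noteq> {}"
    and "smooth_on I x" and "smooth_on I y"
    and "\<forall>t\<in>I. deriv x t \<noteq> 0 \<or> deriv y t \<noteq> 0"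
  shows "(\<forall>lam::real. lam \<noteq> 0 \<and> lam \<noteq> 1 \<longrightarrow>
            (minimal_hypersurface {p. p$3 \<in> I} (hyp_a lam x y) \<longleftrightarrow> (\<exists>c. \<forall>r\<in>I. y r = c)))
       \<and> (\<forall>lam::real. lam \<noteq> 0 \<longrightarrow>
            (minimal_hypersurface {p. p$3 \<in> I} (hyp_b lam x y) \<longleftrightarrow> (\<exists>c. \<forall>r\<in>I. y r = c)))
       \<and> (let S = {z :: complex \<times> complex. Im (snd z * exp (- fst z)) = 0} in
            closed S \<and> range hyp_c = S \<and> (\<exists>G. homeomorphism UNIV S hyp_c G)
            \<and> immersion3 UNIV hyp_c \<and> minimal_hypersurface UNIV hyp_c)"
proof (intro conjI allI impI)
  fix lam :: real assume "lam \<noteq> 0 \<and> lam \<noteq> 1"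
  then show "minimal_hypersurface {p. p$3 \<in> I} (hyp_a lam x y) \<longleftrightarrow> (\<exists>c. \<forall>r\<in>I. y r = c)"
    using part_a[OF assms(1,2,4,5,6)] by blast
next
  fix lam :: real assume "lam \<noteq> 0"
  then show "minimal_hypersurface {p. p$3 \<in> I} (hyp_b lam x y) \<longleftrightarrow> (\<exists>c. \<forall>r\<in>I. y r = c)"
    using part_b[OF assms(1,2,4,5,6)] by blast
next
  show "let S = {z :: complex \<times> complex. Im (snd z * exp (- fst z)) = 0} in
            closed S \<and> range hyp_c = S \<and> (\<exists>G. homeomorphism UNIV S hyp_c G)
            \<and> immersion3 UNIV hyp_c \<and> minimal_hypersurface UNIV hyp_c"
    unfolding Let_def using part_c_top hyp_c_immersion hyp_c_minimal by blast
qed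

end
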